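(* Let $p\in\mathbb{N}$, $\eta>0$ and write $x=\cosh\eta$. Then \[ \sum_{k=-p}^{p-1}\frac{(-1)^{k+1}e^{k\eta}R_p^k(x)}{p-k} =p!\,e^{p\eta}\sinh^p\eta\left\{\frac{(-1)^p}{(2p)!}\bigl[\psi(2p+1)-\psi(1)\bigr]P_p^p(\coth\eta)+\sum_{k=0}^{p-1}\frac{(-1)^k(2k+1)}{(p-k)(p+k+1)}P_k^{-p}(\coth\eta)\right\}. \]
   Context: $\psi$ is the digamma function. For $z>1$, $P_p^p(z)=(z^2-1)^{p/2}\frac{d^p}{dz^p}P_p(z)$ with $P_p$ the Legendre polynomial; for integers $k\ge0$, $m\ge1$, $P_k^{-m}(z)=\frac{1}{m!}\left(\frac{z-1}{z+1}\right)^{m/2}{}_2F_1\!\left(-k,k+1;1+m;\frac{1-z}{2}\right)$. The logarithmic polynomials $R_p^k(x)$, $p\in\mathbb{N}_0$, $k\in\mathbb{Z}$, are defined by $R_0^0(x)=1$, $R_0^k(x)=0$ for $k\ne0$, and $R_p^k(x)=\tfrac12 R_{p-1}^{k-1}(x)+xR_{p-1}^k(x)+\tfrac12 R_{p-1}^{k+1}(x)$ for $p\ge1$. *)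

theory Defs
  imports "HOL-Analysis.Analysis" "HOL-Computational_Algebra.Polynomial"
begin

definition legendre_poly :: "nat \<Rightarrow> real poly" where
  "legendre_poly n = smult (1 / 2 ^ n)
     (\<Sum>j\<le>n div 2. monom ((-1) ^ j * real (n choose j) * real ((2*n - 2*j) choose n)) (n - 2*j))"

definition assoc_legendre_pp :: "nat \<Rightarrow> real \<Rightarrow> real" where
  "assoc_legendre_pp p z = (z^2 - 1) powr (real p / 2) * poly ((pderiv ^^ p) (legendre_poly p)) z"

definition hyp2F1_term :: "nat \<Rightarrow> real \<Rightarrow> real \<Rightarrow> real \<Rightarrow> real" where
  "hyp2F1_term k b c w =
     (\<Sum>j\<le>k. pochhammer (- real k) j * pochhammer b j / (pochhammer c j * fact j) * w ^ j)"

definition assoc_legendre_neg :: "nat \<Rightarrow> nat \<Rightarrow> real \<Rightarrow> real" where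
  "assoc_legendre_neg k m z = 1 / fact m * ((z - 1) / (z + 1)) powr (real m / 2)
     * hyp2F1_term k (real k + 1) (1 + real m) ((1 - z) / 2)"

fun logR :: "nat \<Rightarrow> int \<Rightarrow> real \<Rightarrow> real" where
  "logR 0 k x = (if k = 0 then 1 else 0)"
| "logR (Suc p) k x = logR p (k - 1) x / 2 + x * logR p k x + logR p (k + 1) x / 2"

end

theory Submission
  imports Defs
begin


definition G :: "nat \<Rightarrow> real \<Rightarrow> real" where
  "G j x = (-1)^j * pochhammer (-x) j * pochhammer (x+1) j"

lemma G_0[simp]: "G 0 x = 1" by (simp add: G_def)

lemma G_Suc: "G (Suc j) x = G j x * ((x - real j) * (x + 1 + real j))"
  by (simp add: G_def pochhammer_rec' algebra_simps)

lemma G_shift: "G j (x+1) * (x + 1 - real j) = G j x * (x + 1 + real j)"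
proof (induction j)
  case 0 then show ?case by simp
next
  case (Suc j)
  have "G (Suc j) (x+1) * (x + 1 - real (Suc j)) = (G j (x+1) * (x + 1 - real j)) * (x+2+real j) * (x - real j)"
    by (simp add: G_Suc algebra_simps)
  also have "\<dots> = G j x * (x + 1 + real j) * (x+2+real j) * (x - real j)" using Suc by simp
  also have "\<dots> = G (Suc j) x * (x + 1 + real (Suc j))" by (simp add: G_Suc algebra_simps)
  finally show ?case .
qed

lemma G_zero: "n < j \<Longrightarrow> G j (real n) = 0"
  by (simp add: G_def pochhammer_of_nat_eq_0_iff)

lemma B_sum: "(\<Sum>k<n. (-1)^k * (2*real k+1) * G j (real k)) = (-1)^(n+1) * G j (real n) * (real n - real j)"
proof (induction n)
  case 0 then show ?case using G_zero[of 0 j] by (cases j) auto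
next
  case (Suc n)
  have sh: "G j (real n + 1) * (real n + 1 - real j) = G j (real n) * (real n + 1 + real j)"
    by (rule G_shift)
  show ?case using Suc sh by (simp add: algebra_simps)
qed

lemma alt_harm: "(\<Sum>i\<in>{1..2*p}. (-1)^i / real i) = harm p - harm (2*p)"
proof (induction p)
  case 0 then show ?case by (simp add: harm_def)
next
  case (Suc p)
  have e: "{1..2*Suc p} = insert (2*p+2) (insert (2*p+1) {1..2*p})" by auto
  have "(\<Sum>i\<in>{1..2*Suc p}. (-1)^i / real i) = (\<Sum>i\<in>{1..2*p}. (-1)^i / real i) - 1/(2*real p+1) + 1/(2*real p+2)"
    unfolding e by (simp add: algebra_simps)
  also have "\<dots> = harm (Suc p) - harm (2 * Suc p)"
  proof -
    have h1: "harm (2 * Suc p) = harm (2*p) + 1/(2*real p+1) + 1/(2*real p+2)"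
      by (simp add: harm_Suc inverse_eq_divide algebra_simps)
    have h2: "harm (Suc p) = harm p + 1/(real p+1)"
      by (simp add: harm_Suc inverse_eq_divide algebra_simps)
    have h3: "1/(real p+1) = 1/(2*real p+2) + 1/(2*real p+2)" by (simp add: field_simps)
    show ?thesis unfolding h1 h2 Suc.IH using h3 by linarith
  qed
  finally show ?case .
qed


lemma A0: "(\<Sum>k<p. (-1)^k * real (2*k+1) / (real (p-k) * real (p+k+1))) = (-1)^(p+1) * (harm (2*p) - harm p)"
proof -
  have split: "(-1)^k * real (2*k+1) / (real (p-k) * real (p+k+1)) = (-1)^k / real (p-k) - (-1)^k / real (p+k+1)" if "k < p" for k
    using that by (simp add: field_simps of_nat_diff)
  have s1: "(\<Sum>k<p. (-1)^k / real (p-k)) = (\<Sum>i\<in>{1..p}. (-1)^p * ((-1)^i / real i))"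
    by (rule sum.reindex_bij_witness[where i="\<lambda>i. p - i" and j="\<lambda>k. p - k"])
       (auto simp: power_diff minus_one_power_iff)
  have s2: "(\<Sum>k<p. (-1)^k / real (p+k+1)) = (\<Sum>i\<in>{p+1..2*p}. - ((-1)^p * ((-1)^i / real i)))"
    by (rule sum.reindex_bij_witness[where i="\<lambda>i. i - p - 1" and j="\<lambda>k. p + k + 1"])
       (auto simp: minus_one_power_iff)
  have un: "{1..2*p} = {1..p} \<union> {p+1..2*p}" by auto
  have s3: "(\<Sum>i\<in>{1..2*p}. (-1)^i / real i) = (\<Sum>i\<in>{1..p}. (-1)^i / real i) + (\<Sum>i\<in>{p+1..2*p}. (-1)^i / real i)"
    unfolding un by (rule sum.union_disjoint) auto
  have "(\<Sum>k<p. (-1)^k * real (2*k+1) / (real (p-k) * real (p+k+1))) = (\<Sum>k<p. (-1)^k / real (p-k)) - (\<Sum>k<p. (-1)^k / real (p+k+1))"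
    unfolding sum_subtractf[symmetric] by (rule sum.cong[OF refl], rule split) auto
  also have "\<dots> = (-1)^p * (\<Sum>i\<in>{1..2*p}. (-1)^i / real i)"
    unfolding s1 s2 s3 by (simp add: sum_distrib_left sum_negf algebra_simps)
  also have "\<dots> = (-1)^(p+1) * (harm (2*p) - harm p)" unfolding alt_harm by (simp add: algebra_simps)
  finally show ?thesis .
qed

lemma tau: "(\<Sum>k<p. (-1)^k * real (2*k+1) / (real (p-k) * real (p+k+1)) * G j (real k))
   = (-1)^(p+1) * G j (real p) * (harm (2*p) - harm (p+j))"
proof (induction j)
  case 0 then show ?case using A0 by simp
next
  case (Suc j)
  have key: "(-1)^k * real (2*k+1) / (real (p-k) * real (p+k+1)) * G (Suc j) (real k)
     = ((real p - real j) * (real p + 1 + real j)) * ((-1)^k * real (2*k+1) / (real (p-k) * real (p+k+1)) * G j (real k))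
       - (-1)^k * (2*real k+1) * G j (real k)" if "k < p" for k
  proof -
    define D where "D = real (p-k) * real (p+k+1)"
    define P where "P = (real p - real j) * (real p + 1 + real j)"
    define c where "c = (-1)^k * real (2*k+1) / D"
    have e1: "(real k - real j) * (real k + 1 + real j) = P - D"
      using that unfolding P_def D_def by (simp add: of_nat_diff algebra_simps)
    have "D \<noteq> 0" using that unfolding D_def by simp
    then have e2: "c * D = (-1)^k * (2*real k+1)" unfolding c_def by simp
    have "c * G (Suc j) (real k) = P * (c * G j (real k)) - (c * D) * G j (real k)"
      unfolding G_Suc e1 by (simp add: algebra_simps)
    then show ?thesis unfolding e2 unfolding c_def D_def P_def by simp
  qed
  have "(\<Sum>k<p. (-1)^k * real (2*k+1) / (real (p-k) * real (p+k+1)) * G (Suc j) (real k))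
     = ((real p - real j) * (real p + 1 + real j)) * (\<Sum>k<p. (-1)^k * real (2*k+1) / (real (p-k) * real (p+k+1)) * G j (real k))
       - (\<Sum>k<p. (-1)^k * (2*real k+1) * G j (real k))"
    unfolding sum_distrib_left sum_subtractf[symmetric] by (rule sum.cong[OF refl], rule key) auto
  also have "\<dots> = (-1)^(p+1) * G (Suc j) (real p) * (harm (2*p) - harm (p+Suc j))"
    unfolding Suc B_sum by (simp add: G_Suc harm_Suc field_simps)
  finally show ?case .
qed



definition bz :: "nat \<Rightarrow> int \<Rightarrow> real" where
  "bz p m = (if 0 \<le> m \<and> m \<le> int p then real (p choose nat m) else 0)"

lemma bz_Suc: "bz (Suc p) m = bz p m + bz p (m - 1)"
proof (cases "m \<le> 0")
  case True
  show ?thesis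
  proof (cases "m = 0")
    case True
    have "bz (Suc p) 0 = 1" "bz p 0 = 1" "bz p (-1) = 0" by (simp_all add: bz_def)
    then show ?thesis using True by simp
  next
    case False
    with \<open>m \<le> 0\<close> have "m < 0" by simp
    then show ?thesis unfolding bz_def by simp
  qed
next
  case False
  define n where "n = nat m - 1"
  have n: "m = int (Suc n)" using False unfolding n_def by simp
  have e: "nat (int (Suc n) - 1) = n" by simp
  show ?thesis unfolding n bz_def e by (simp del: of_nat_Suc)
qed

lemma bz_nat: "bz N (int j) = real (N choose j)"
  by (auto simp: bz_def binomial_eq_0)

lemma vandermonde_bz: "(\<Sum>i\<le>n. real (n choose i) * bz q (j - int i)) = bz (n+q) j"
proof (induction n arbitrary: j)
  case 0 then show ?case by simp
next
  case (Suc n)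
  have s1: "(\<Sum>i\<le>Suc n. real (Suc n choose i) * bz q (j - int i))
        = bz q j + (\<Sum>i\<le>n. real (Suc n choose Suc i) * bz q (j - int (Suc i)))"
    by (subst sum.atMost_Suc_shift) simp
  have s2: "(\<Sum>i\<le>n. real (Suc n choose Suc i) * bz q (j - int (Suc i)))
      = (\<Sum>i\<le>n. real (n choose i) * bz q (j - 1 - int i)) + (\<Sum>i\<le>n. real (n choose Suc i) * bz q (j - int (Suc i)))"
    unfolding sum.distrib[symmetric] by (rule sum.cong[OF refl]) (simp add: algebra_simps)
  have s3: "bz q j + (\<Sum>i\<le>n. real (n choose Suc i) * bz q (j - int (Suc i))) = (\<Sum>i\<le>Suc n. real (n choose i) * bz q (j - int i))"
    by (subst sum.atMost_Suc_shift) simp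
  have s4: "(\<Sum>i\<le>Suc n. real (n choose i) * bz q (j - int i)) = (\<Sum>i\<le>n. real (n choose i) * bz q (j - int i))" by simp
  have "(\<Sum>i\<le>Suc n. real (Suc n choose i) * bz q (j - int i))
      = (\<Sum>i\<le>n. real (n choose i) * bz q (j - int i)) + (\<Sum>i\<le>n. real (n choose i) * bz q (j - 1 - int i))"
    using s1 s2 s3 s4 by linarith
  also have "\<dots> = bz (Suc n + q) j" using Suc by (simp add: bz_Suc)
  finally show ?case .
qed

lemma alt_binom_harm: "(\<Sum>j\<in>{1..N}. (-1)^j * real (N choose j) / real j) = - harm N"
proof (induction N)
  case 0 then show ?case by (simp add: harm_def)
next
  case (Suc N)
  have a: "(\<Sum>j\<in>{1..Suc N}. (-1)^j * real (N choose j) / real j) = (\<Sum>j\<in>{1..N}. (-1)^j * real (N choose j) / real j)"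
    by simp
  have b: "real (N choose (j - 1)) / real j = real (Suc N choose j) / real (Suc N)" if "j \<ge> 1" for j
  proof -
    define i where "i = j - 1"
    have i: "j = Suc i" using that unfolding i_def by simp
    have "real (Suc N choose Suc i) * real (Suc i) = real (Suc N) * real (N choose i)"
      by (metis Suc_times_binomial_eq mult.commute of_nat_mult)
    then show ?thesis unfolding i by (simp add: field_simps)
  qed
  have c: "(\<Sum>j\<in>{1..Suc N}. (-1)^j * real (N choose (j-1)) / real j) = - 1 / real (Suc N)"
  proof -
    have "(\<Sum>j\<in>{1..Suc N}. (-1)^j * real (N choose (j-1)) / real j) = (\<Sum>j\<in>{1..Suc N}. (-1)^j * real (Suc N choose j)) / real (Suc N)"
      unfolding sum_divide_distrib
    proof (rule sum.cong[OF refl])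
      fix j assume "j \<in> {1..Suc N}"
      then have "j \<ge> 1" by simp
      from b[OF this] show "(-1)^j * real (N choose (j-1)) / real j = (-1)^j * real (Suc N choose j) / real (Suc N)"
        by (metis times_divide_eq_right)
    qed
    also have "(\<Sum>j\<in>{1..Suc N}. (-1)^j * real (Suc N choose j)) = - 1"
    proof -
      have "(\<Sum>j\<le>Suc N. (-1)^j * real (Suc N choose j)) = 0" by (rule choose_alternating_sum) simp
      moreover have "(\<Sum>j\<le>Suc N. (-1)^j * real (Suc N choose j)) = 1 + (\<Sum>j\<in>{1..Suc N}. (-1)^j * real (Suc N choose j))"
        by (simp add: atMost_atLeast0 sum.atLeast_Suc_atMost)
      ultimately show ?thesis by simp
    qed
    finally show ?thesis by simp
  qed
  have d: "(-1)^j * real (Suc N choose j) / real j = (-1)^j * real (N choose j) / real j + (-1)^j * real (N choose (j-1)) / real j"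
    if "j \<in> {1..Suc N}" for j
  proof -
    define i where "i = j - 1"
    have i: "j = Suc i" using that unfolding i_def by simp
    have e: "real (Suc N choose Suc i) = real (N choose Suc i) + real (N choose i)" by simp
    show ?thesis unfolding i diff_Suc_1 e by (simp only: ring_distribs add_divide_distrib)
  qed
  have "(\<Sum>j\<in>{1..Suc N}. (-1)^j * real (Suc N choose j) / real j)
     = (\<Sum>j\<in>{1..Suc N}. (-1)^j * real (N choose j) / real j) + (\<Sum>j\<in>{1..Suc N}. (-1)^j * real (N choose (j-1)) / real j)"
    unfolding sum.distrib[symmetric] by (rule sum.cong[OF refl], rule d)
  also have "\<dots> = - harm (Suc N)" unfolding a c Suc by (simp add: harm_Suc inverse_eq_divide)
  finally show ?case .
qed

lemma alt_binom_harm': "N \<le> M \<Longrightarrow> (\<Sum>j\<in>{1..M}. (-1)^j * real (N choose j) / real j) = - harm N"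
proof -
  assume "N \<le> M"
  then have "(\<Sum>j\<in>{1..M}. (-1)^j * real (N choose j) / real j) = (\<Sum>j\<in>{1..N}. (-1)^j * real (N choose j) / real j)"
    by (intro sum.mono_neutral_right) auto
  then show ?thesis using alt_binom_harm by simp
qed



lemma choose_swap: "i \<le> p \<Longrightarrow> m \<le> p \<Longrightarrow> (p choose i) * ((p - i) choose m) = (p choose m) * ((p - m) choose i)"
proof (cases "m \<le> p - i")
  case True
  assume ip: "i \<le> p" and mp: "m \<le> p"
  have "(p choose (p-i)) * ((p - i) choose m) = (p choose m) * ((p - m) choose (p - i - m))"
    using choose_mult[of m "p-i" p] True by simp
  moreover have "p choose (p-i) = p choose i" using ip by (simp add: binomial_symmetric[symmetric])
  moreover have "(p - m) choose (p - i - m) = (p - m) choose i"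
  proof -
    have "i \<le> p - m" using True ip by arith
    then have "(p - m) choose i = (p - m) choose (p - m - i)" by (rule binomial_symmetric)
    moreover have "p - m - i = p - i - m" by simp
    ultimately show ?thesis by simp
  qed
  ultimately show ?thesis by simp
next
  case False
  assume ip: "i \<le> p" and mp: "m \<le> p"
  have "p - m < i" using False ip mp by arith
  then show ?thesis using False by (simp add: binomial_eq_0)
qed

lemma binom_ext: "n \<le> p \<Longrightarrow> (1 + s::real)^n = (\<Sum>m\<le>p. real (n choose m) * s^m)"
proof -
  assume "n \<le> p"
  have "(1 + s::real)^n = (s + 1)^n" by (simp add: add.commute)
  also have "\<dots> = (\<Sum>m\<le>n. real (n choose m) * s^m)" by (simp add: binomial_ring)
  also have "\<dots> = (\<Sum>m\<le>p. real (n choose m) * s^m)"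
    using \<open>n \<le> p\<close> by (intro sum.mono_neutral_left) (auto simp: binomial_eq_0)
  finally show ?thesis .
qed

lemma inner_W: "m \<le> p \<Longrightarrow>
  (\<Sum>i\<le>p. real ((p - m) choose i) * (\<Sum>j\<in>{1..2*p}. (-1)^j * bz p (int j - int i) / real j)) = - harm (2*p - m)"
proof -
  assume mp: "m \<le> p"
  have "(\<Sum>i\<le>p. real ((p - m) choose i) * (\<Sum>j\<in>{1..2*p}. (-1)^j * bz p (int j - int i) / real j))
     = (\<Sum>j\<in>{1..2*p}. (-1)^j / real j * (\<Sum>i\<le>p. real ((p - m) choose i) * bz p (int j - int i)))"
    by (simp add: sum_distrib_left sum_distrib_right sum.swap[of _ "{..p}"] algebra_simps)
  also have "\<dots> = (\<Sum>j\<in>{1..2*p}. (-1)^j / real j * (\<Sum>i\<le>p - m. real ((p - m) choose i) * bz p (int j - int i)))"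
  proof (rule sum.cong[OF refl])
    fix j
    have "(\<Sum>i\<le>p. real ((p - m) choose i) * bz p (int j - int i)) = (\<Sum>i\<le>p - m. real ((p - m) choose i) * bz p (int j - int i))"
      by (intro sum.mono_neutral_right) (auto simp: binomial_eq_0)
    then show "(-1)^j / real j * (\<Sum>i\<le>p. real ((p - m) choose i) * bz p (int j - int i))
       = (-1)^j / real j * (\<Sum>i\<le>p - m. real ((p - m) choose i) * bz p (int j - int i))" by simp
  qed
  also have "\<dots> = (\<Sum>j\<in>{1..2*p}. (-1)^j * real ((2*p - m) choose j) / real j)"
  proof (rule sum.cong[OF refl])
    fix j
    have "p - m + p = 2*p - m" using mp by simp
    then show "(-1)^j / real j * (\<Sum>i\<le>p - m. real ((p - m) choose i) * bz p (int j - int i)) = (-1)^j * real ((2*p - m) choose j) / real j"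
      by (simp add: vandermonde_bz bz_nat)
  qed
  also have "\<dots> = - harm (2*p - m)" by (rule alt_binom_harm') simp
  finally show ?thesis .
qed

lemma lhs_poly:
  "(\<Sum>i\<le>p. real (p choose i) * (1 + s)^(p - i) * (\<Sum>j\<in>{1..2*p}. (-1)^j * bz p (int j - int i) / real j))
   = - (\<Sum>m\<le>p. real (p choose m) * harm (2*p - m) * s^m)"
proof -
  define W where "W i = (\<Sum>j\<in>{1..2*p}. (-1)^j * bz p (int j - int i) / real j)" for i
  have "(\<Sum>i\<le>p. real (p choose i) * (1 + s)^(p - i) * W i)
      = (\<Sum>i\<le>p. \<Sum>m\<le>p. real (p choose i) * real ((p-i) choose m) * s^m * W i)"
    by (rule sum.cong[OF refl]) (simp add: binom_ext[of _ p] sum_distrib_left sum_distrib_right algebra_simps)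
  also have "\<dots> = (\<Sum>i\<le>p. \<Sum>m\<le>p. real (p choose m) * s^m * (real ((p-m) choose i) * W i))"
  proof (intro sum.cong[OF refl])
    fix i m assume "i \<in> {..p}" "m \<in> {..p}"
    then have "real (p choose i) * real ((p-i) choose m) = real (p choose m) * real ((p-m) choose i)"
      using choose_swap[of i p m] by (metis atMost_iff of_nat_mult)
    then show "real (p choose i) * real ((p-i) choose m) * s^m * W i = real (p choose m) * s^m * (real ((p-m) choose i) * W i)"
      by (simp add: algebra_simps)
  qed
  also have "\<dots> = (\<Sum>m\<le>p. real (p choose m) * s^m * (\<Sum>i\<le>p. real ((p-m) choose i) * W i))"
    by (subst sum.swap) (simp add: sum_distrib_left)
  also have "\<dots> = (\<Sum>m\<le>p. real (p choose m) * s^m * (- harm (2*p - m)))"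
  proof (rule sum.cong[OF refl])
    fix m assume "m \<in> {..p}"
    then have "(\<Sum>i\<le>p. real ((p-m) choose i) * W i) = - harm (2*p - m)" unfolding W_def by (intro inner_W) simp
    then show "real (p choose m) * s^m * (\<Sum>i\<le>p. real ((p-m) choose i) * W i) = real (p choose m) * s^m * (- harm (2*p - m))" by simp
  qed
  also have "\<dots> = - (\<Sum>m\<le>p. real (p choose m) * harm (2*p - m) * s^m)"
    by (simp add: sum_negf[symmetric] algebra_simps)
  finally show ?thesis unfolding W_def .
qed



lemma G_binom: "j \<le> p \<Longrightarrow> G j (real p) / (pochhammer (1 + real p) j * fact j) = real (p choose j)"
proof -
  assume "j \<le> p"
  have pz: "pochhammer (1 + real p) j \<noteq> 0" by (simp add: pochhammer_eq_0_iff)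
  have "real (p choose j) = (-1)^j * pochhammer (- real p) j / fact j"
    by (simp add: binomial_gbinomial gbinomial_pochhammer)
  then show ?thesis using pz unfolding G_def by (simp add: field_simps add.commute)
qed

lemma F_expand:
  assumes "s \<noteq> 0" "k < p"
  shows "s^p * hyp2F1_term k (real k + 1) (1 + real p) (-1/s)
     = (\<Sum>j\<le>p. G j (real k) / (pochhammer (1 + real p) j * fact j) * s^(p-j))"
proof -
  have "s^p * hyp2F1_term k (real k + 1) (1 + real p) (-1/s)
     = (\<Sum>j\<le>k. G j (real k) / (pochhammer (1 + real p) j * fact j) * s^(p-j))"
    unfolding hyp2F1_term_def sum_distrib_left
  proof (rule sum.cong[OF refl])
    fix j assume "j \<in> {..k}"
    then have jp: "j \<le> p" using assms by simp
    have sp: "s^p = s^(p-j) * s^j" using jp by (simp add: power_add[symmetric])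
    have "(-1/s)^j = (-1)^j / s^j" by (rule power_divide)
    then have "s^p * (-1/s)^j = (-1)^j * s^(p-j)"
      unfolding sp using assms(1) by simp
    then show "s^p * (pochhammer (- real k) j * pochhammer (real k + 1) j / (pochhammer (1 + real p) j * fact j) * (-1/s)^j)
       = G j (real k) / (pochhammer (1 + real p) j * fact j) * s^(p-j)"
      unfolding G_def by (simp add: algebra_simps)
  qed
  also have "\<dots> = (\<Sum>j\<le>p. G j (real k) / (pochhammer (1 + real p) j * fact j) * s^(p-j))"
    using assms(2) by (intro sum.mono_neutral_left) (auto simp: G_zero)
  finally show ?thesis .
qed

lemma rhs_poly:
  assumes "s \<noteq> 0"
  shows "(-1)^p * harm (2*p) * (1+s)^p
     + (\<Sum>k<p. (-1)^k * real (2*k+1) / (real (p-k) * real (p+k+1)) * (s^p * hyp2F1_term k (real k + 1) (1 + real p) (-1/s)))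
     = (-1)^p * (\<Sum>m\<le>p. real (p choose m) * harm (2*p - m) * s^m)"
proof -
  define c where "c k = (-1)^k * real (2*k+1) / (real (p-k) * real (p+k+1))" for k
  have "(\<Sum>k<p. c k * (s^p * hyp2F1_term k (real k + 1) (1 + real p) (-1/s)))
      = (\<Sum>k<p. \<Sum>j\<le>p. c k * G j (real k) * (s^(p-j) / (pochhammer (1 + real p) j * fact j)))"
  proof (rule sum.cong[OF refl])
    fix k assume "k \<in> {..<p}"
    then have kp: "k < p" by simp
    show "c k * (s^p * hyp2F1_term k (real k + 1) (1 + real p) (-1/s)) = (\<Sum>j\<le>p. c k * G j (real k) * (s^(p-j) / (pochhammer (1 + real p) j * fact j)))"
      unfolding F_expand[OF assms kp] sum_distrib_left by (rule sum.cong[OF refl]) simp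
  qed
  also have "\<dots> = (\<Sum>j\<le>p. (\<Sum>k<p. c k * G j (real k)) * (s^(p-j) / (pochhammer (1 + real p) j * fact j)))"
    by (subst sum.swap) (simp add: sum_distrib_right sum_divide_distrib)
  also have "\<dots> = (\<Sum>j\<le>p. (-1)^(p+1) * (harm (2*p) - harm (p+j)) * real (p choose j) * s^(p-j))"
  proof (rule sum.cong[OF refl])
    fix j assume "j \<in> {..p}"
    then have "G j (real p) / (pochhammer (1 + real p) j * fact j) = real (p choose j)" by (intro G_binom) simp
    moreover have "(\<Sum>k<p. c k * G j (real k)) = (-1)^(p+1) * G j (real p) * (harm (2*p) - harm (p+j))"
      unfolding c_def by (rule tau)
    ultimately show "(\<Sum>k<p. c k * G j (real k)) * (s^(p-j) / (pochhammer (1 + real p) j * fact j))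
        = (-1)^(p+1) * (harm (2*p) - harm (p+j)) * real (p choose j) * s^(p-j)"
    proof -
      assume g: "G j (real p) / (pochhammer (1 + real p) j * fact j) = real (p choose j)"
        and t: "(\<Sum>k<p. c k * G j (real k)) = (-1)^(p+1) * G j (real p) * (harm (2*p) - harm (p+j))"
      show ?thesis unfolding t g[symmetric] by (simp add: algebra_simps)
    qed
  qed
  also have "\<dots> = (\<Sum>m\<le>p. (-1)^(p+1) * (harm (2*p) - harm (2*p - m)) * real (p choose m) * s^m)"
    by (rule sum.reindex_bij_witness[where i="\<lambda>m. p - m" and j="\<lambda>j. p - j"])
       (auto simp: binomial_symmetric[symmetric] intro!: arg_cong[where f=harm])
  finally have S: "(\<Sum>k<p. c k * (s^p * hyp2F1_term k (real k + 1) (1 + real p) (-1/s)))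
      = (\<Sum>m\<le>p. (-1)^(p+1) * (harm (2*p) - harm (2*p - m)) * real (p choose m) * s^m)" .
  have P: "(1+s)^p = (\<Sum>m\<le>p. real (p choose m) * s^m)" using binom_ext[of p p s] by simp
  have S': "(\<Sum>k<p. (-1)^k * real (2*k+1) / (real (p-k) * real (p+k+1)) * (s^p * hyp2F1_term k (real k + 1) (1 + real p) (-1/s)))
      = (\<Sum>m\<le>p. (-1)^(p+1) * (harm (2*p) - harm (2*p - m)) * real (p choose m) * s^m)"
    using S unfolding c_def .
  show ?thesis unfolding S' P sum_distrib_left sum.distrib[symmetric]
    by (rule sum.cong[OF refl]) (simp add: algebra_simps)
qed



lemma pascal_sum: "(\<Sum>i\<le>Suc p. real (Suc p choose i) * X i) = (\<Sum>i\<le>p. real (p choose i) * (X i + X (Suc i)))"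
proof -
  have s1: "(\<Sum>i\<le>Suc p. real (Suc p choose i) * X i) = X 0 + (\<Sum>i\<le>p. real (Suc p choose Suc i) * X (Suc i))"
    by (subst sum.atMost_Suc_shift) simp
  have s2: "(\<Sum>i\<le>p. real (Suc p choose Suc i) * X (Suc i)) = (\<Sum>i\<le>p. real (p choose i) * X (Suc i)) + (\<Sum>i\<le>p. real (p choose Suc i) * X (Suc i))"
    unfolding sum.distrib[symmetric] by (rule sum.cong[OF refl]) (simp add: algebra_simps)
  have s3: "X 0 + (\<Sum>i\<le>p. real (p choose Suc i) * X (Suc i)) = (\<Sum>i\<le>Suc p. real (p choose i) * X i)"
    by (subst sum.atMost_Suc_shift) simp
  have s4: "(\<Sum>i\<le>Suc p. real (p choose i) * X i) = (\<Sum>i\<le>p. real (p choose i) * X i)" by simp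
  show ?thesis using s1 s2 s3 s4 by (simp add: sum.distrib algebra_simps)
qed

lemma logR_formula:
  "logR p k (cosh \<eta>) = (1/2^p) * (\<Sum>i\<le>p. real (p choose i) * bz p (int p - k - int i) * exp (real_of_int (int p - k - 2 * int i) * \<eta>))"
proof (induction p arbitrary: k)
  case 0 then show ?case by (simp add: bz_def)
next
  case (Suc p)
  define ea where "ea i = exp (real_of_int (int p - k - 2 * int i) * \<eta>)" for i
  define X where "X i = bz (Suc p) (int (Suc p) - k - int i) * exp (real_of_int (int (Suc p) - k - 2 * int i) * \<eta>)" for i
  have per: "X i + X (Suc i) = bz p (int p - (k-1) - int i) * (ea i * exp \<eta>) + 2 * cosh \<eta> * (bz p (int p - k - int i) * ea i)
       + bz p (int p - (k+1) - int i) * (ea i * exp (-\<eta>))" for i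
  proof -
    have e1: "exp (real_of_int (int (Suc p) - k - 2 * int i) * \<eta>) = ea i * exp \<eta>"
      unfolding ea_def exp_add[symmetric] by (simp add: algebra_simps)
    have e2: "exp (real_of_int (int (Suc p) - k - 2 * int (Suc i)) * \<eta>) = ea i * exp (-\<eta>)"
      unfolding ea_def exp_add[symmetric] by (simp add: algebra_simps)
    have b1: "bz (Suc p) (int (Suc p) - k - int i) = bz p (int p - (k-1) - int i) + bz p (int p - k - int i)"
      using bz_Suc[of p "int (Suc p) - k - int i"] by (simp add: algebra_simps)
    have b2: "bz (Suc p) (int (Suc p) - k - int (Suc i)) = bz p (int p - k - int i) + bz p (int p - (k+1) - int i)"
      using bz_Suc[of p "int (Suc p) - k - int (Suc i)"] by (simp add: algebra_simps)
    have ch: "2 * cosh \<eta> = exp \<eta> + exp (-\<eta>)" by (simp add: cosh_def)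
    show ?thesis unfolding X_def e1 e2 b1 b2 ch by (simp add: algebra_simps)
  qed
  have IH1: "logR p (k-1) (cosh \<eta>) = (1/2^p) * (\<Sum>i\<le>p. real (p choose i) * (bz p (int p - (k-1) - int i) * (ea i * exp \<eta>)))"
  proof -
    have "exp (real_of_int (int p - (k-1) - 2 * int i) * \<eta>) = ea i * exp \<eta>" for i
      unfolding ea_def exp_add[symmetric] by (simp add: algebra_simps)
    then show ?thesis using Suc[of "k-1"] by (simp add: algebra_simps)
  qed
  have IH2: "logR p (k+1) (cosh \<eta>) = (1/2^p) * (\<Sum>i\<le>p. real (p choose i) * (bz p (int p - (k+1) - int i) * (ea i * exp (-\<eta>))))"
  proof -
    have "exp (real_of_int (int p - (k+1) - 2 * int i) * \<eta>) = ea i * exp (-\<eta>)" for i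
      unfolding ea_def exp_add[symmetric] by (simp add: algebra_simps)
    then show ?thesis using Suc[of "k+1"] by (simp add: algebra_simps)
  qed
  have IH0: "logR p k (cosh \<eta>) = (1/2^p) * (\<Sum>i\<le>p. real (p choose i) * (bz p (int p - k - int i) * ea i))"
    using Suc[of k] unfolding ea_def by (simp add: algebra_simps)
  have "(1/2^Suc p) * (\<Sum>i\<le>Suc p. real (Suc p choose i) * X i) = (1/2^Suc p) * (\<Sum>i\<le>p. real (p choose i) * (X i + X (Suc i)))"
    by (subst pascal_sum) (rule refl)
  also have "\<dots> = logR p (k-1) (cosh \<eta>) / 2 + cosh \<eta> * logR p k (cosh \<eta>) + logR p (k+1) (cosh \<eta>) / 2"
    unfolding per IH0 IH1 IH2 by (simp add: sum_distrib_left sum_divide_distrib sum.distrib algebra_simps)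
  finally show ?case unfolding X_def by (simp add: mult.assoc)
qed



lemma sign_lemma: "(-1::real) powi (int p - int j + 1) = (-1)^(p+1) * (-1)^j"
proof -
  have e: "int p - int j + 1 = int (p+1) - int j" by simp
  have "(-1::real) powi (int p - int j + 1) = (-1::real) powi (int (p+1)) / (-1) powi (int j)"
    by (subst e, rule power_int_diff) simp
  also have "\<dots> = (-1)^(p+1) / (-1)^j" by (simp only: power_int_of_nat)
  also have "\<dots> = (-1)^(p+1) * (-1)^j" by (simp add: field_simps minus_one_power_iff)
  finally show ?thesis .
qed

lemma lhs_reindex:
  "(\<Sum>k\<in>{- int p .. int p - 1}.
      (-1) powi (k + 1) * exp (real_of_int k * \<eta>) * logR p k (cosh \<eta>) / (real p - real_of_int k))
   = (1/2^p) * (\<Sum>i\<le>p. real (p choose i) * exp (real_of_int (int p - 2 * int i) * \<eta>)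
        * ((-1)^(p+1) * (\<Sum>j\<in>{1..2*p}. (-1)^j * bz p (int j - int i) / real j)))"
proof -
  define f where "f k = (-1) powi (k + 1) * exp (real_of_int k * \<eta>) * logR p k (cosh \<eta>) / (real p - real_of_int k)" for k
  have "(\<Sum>k\<in>{- int p .. int p - 1}. f k) = (\<Sum>j\<in>{1..2*p}. f (int p - int j))"
    by (rule sum.reindex_bij_witness[where i="\<lambda>k. int p - int k" and j="\<lambda>k. nat (int p - k)"]) auto
  also have "\<dots> = (\<Sum>j\<in>{1..2*p}. \<Sum>i\<le>p. (1/2^p) * (real (p choose i) * exp (real_of_int (int p - 2 * int i) * \<eta>)
        * ((-1)^(p+1) * ((-1)^j * bz p (int j - int i) / real j))))"
  proof (rule sum.cong[OF refl])
    fix j assume "j \<in> {1..2*p}"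
    then have j0: "real j \<noteq> 0" by simp
    have d: "real p - real_of_int (int p - int j) = real j" by simp
    have ex: "exp (real_of_int (int p - int j) * \<eta>) * exp (real_of_int (int p - (int p - int j) - 2 * int i) * \<eta>)
       = exp (real_of_int (int p - 2 * int i) * \<eta>)" for i
      unfolding exp_add[symmetric] by (simp add: algebra_simps)
    have bzz: "bz p (int p - (int p - int j) - int i) = bz p (int j - int i)" for i by simp
    show "f (int p - int j) = (\<Sum>i\<le>p. (1/2^p) * (real (p choose i) * exp (real_of_int (int p - 2 * int i) * \<eta>)
        * ((-1)^(p+1) * ((-1)^j * bz p (int j - int i) / real j))))"
    proof -
      have "f (int p - int j) = ((-1)^(p+1) * (-1)^j * exp (real_of_int (int p - int j) * \<eta>) / real j) * logR p (int p - int j) (cosh \<eta>)"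
        unfolding f_def d sign_lemma by simp
      also have "\<dots> = (\<Sum>i\<le>p. (1/2^p) * (real (p choose i) * exp (real_of_int (int p - 2 * int i) * \<eta>)
        * ((-1)^(p+1) * ((-1)^j * bz p (int j - int i) / real j))))"
      unfolding logR_formula[of p "int p - int j"] sum_distrib_left
    proof (rule sum.cong[OF refl])
      fix i
      show "(-1)^(p+1) * (-1)^j * exp (real_of_int (int p - int j) * \<eta>) / real j *
         (1/2^p * (real (p choose i) * bz p (int p - (int p - int j) - int i) * exp (real_of_int (int p - (int p - int j) - 2 * int i) * \<eta>)))
        = 1/2^p * (real (p choose i) * exp (real_of_int (int p - 2 * int i) * \<eta>) * ((-1)^(p+1) * ((-1)^j * bz p (int j - int i) / real j)))"
        unfolding bzz ex[symmetric] by (simp add: algebra_simps)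
    qed
    finally show ?thesis .
    qed
  qed
  also have "\<dots> = (1/2^p) * (\<Sum>i\<le>p. real (p choose i) * exp (real_of_int (int p - 2 * int i) * \<eta>)
        * ((-1)^(p+1) * (\<Sum>j\<in>{1..2*p}. (-1)^j * bz p (int j - int i) / real j)))"
    by (subst sum.swap) (simp add: sum_distrib_left)
  finally show ?thesis unfolding f_def .
qed



lemma funpow_pderiv_monom:
  "(pderiv ^^ k) (monom c n) = monom (c * of_nat (\<Prod>i<k. (n - i))) (n - k)"
proof (induction k)
  case 0 then show ?case by simp
next
  case (Suc k)
  show ?case by (simp add: Suc pderiv_monom diff_diff_add mult.commute mult.left_commute)
qed

lemma funpow_pderiv_sum: "(pderiv ^^ k) (\<Sum>x\<in>A. f x) = (\<Sum>x\<in>A. (pderiv ^^ k) (f x))"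
proof (induction k)
  case 0 then show ?case by simp
next
  case (Suc k)
  have "pderiv (\<Sum>x\<in>A. g x) = (\<Sum>x\<in>A. pderiv (g x))" for g :: "'b \<Rightarrow> 'a poly"
    by (induction A rule: infinite_finite_induct) (simp_all add: pderiv_add)
  then show ?case by (simp add: Suc)
qed

lemma funpow_pderiv_smult: "(pderiv ^^ k) (smult c q) = smult c ((pderiv ^^ k) q)"
  by (induction k) (simp_all add: pderiv_smult)

lemma legendre_top: "(pderiv ^^ p) (legendre_poly p) = [: fact (2*p) / (2^p * fact p) :]"
proof -
  define c where "c j = (-1) ^ j * real (p choose j) * real ((2*p - 2*j) choose p)" for j
  have t: "(pderiv ^^ p) (monom (c j) (p - 2*j)) = (if j = 0 then [: c 0 * fact p :] else 0)" if "j \<le> p div 2" for j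
  proof (cases "j = 0")
    case True
    then show ?thesis by (simp add: funpow_pderiv_monom fact_prod_rev monom_0 atLeast0LessThan)
  next
    case False
    have "(0::nat) = p - 2*j - (p - 2*j)" by simp
    moreover have "p - 2*j < p" using False that by auto
    ultimately have "(\<Prod>i<p. (p - 2*j - i)) = 0"
      by (intro prod_zero) (auto intro!: bexI[of _ "p - 2*j"])
    then show ?thesis using False by (simp add: funpow_pderiv_monom)
  qed
  have "(pderiv ^^ p) (legendre_poly p) = smult (1/2^p) (\<Sum>j\<le>p div 2. (if j = 0 then [: c 0 * fact p :] else 0))"
    unfolding legendre_poly_def funpow_pderiv_smult funpow_pderiv_sum c_def[symmetric]
    by (intro arg_cong[where f="smult (1/2^p)"] sum.cong refl) (simp add: t)
  also have "\<dots> = smult (1/2^p) [: c 0 * fact p :]"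
    by (simp add: sum.delta)
  also have "c 0 * fact p = fact (2*p) / fact p"
    unfolding c_def by (simp add: binomial_fact field_simps)
  finally show ?thesis by simp
qed



lemma pp_eval:
  assumes "\<eta> > 0"
  shows "assoc_legendre_pp p (cosh \<eta> / sinh \<eta>) = (1 / sinh \<eta>)^p * (fact (2*p) / (2^p * fact p))"
proof -
  define a where "a = 1 / sinh \<eta>"
  have sp: "sinh \<eta> > 0" using assms by simp
  then have ap: "a > 0" unfolding a_def by simp
  have "(cosh \<eta> / sinh \<eta>)^2 - 1 = a^2"
    using sp cosh_square_eq[of \<eta>] unfolding a_def by (simp add: field_simps power2_eq_square)
  also have "\<dots> = a powr (real 2)" using ap by (simp add: powr_realpow)
  finally have z: "(cosh \<eta> / sinh \<eta>)^2 - 1 = a powr (real 2)" .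
  have "((cosh \<eta> / sinh \<eta>)^2 - 1) powr (real p / 2) = a^p"
    unfolding z powr_powr using ap by (simp add: powr_realpow)
  then show ?thesis unfolding assoc_legendre_pp_def legendre_top a_def by simp
qed

lemma neg_eval:
  assumes "\<eta> > 0"
  shows "assoc_legendre_neg k p (cosh \<eta> / sinh \<eta>) =
     1 / fact p * exp (- (real p * \<eta>)) * hyp2F1_term k (real k + 1) (1 + real p) (-1 / (exp (2*\<eta>) - 1))"
proof -
  have sp: "sinh \<eta> > 0" using assms by simp
  have e2: "exp (2*\<eta>) = exp \<eta> * exp \<eta>" by (simp add: exp_add[symmetric])
  have epos: "exp \<eta> > 1" using assms by simp
  have ch: "cosh \<eta> = (exp \<eta> + exp (-\<eta>))/2" and sh: "sinh \<eta> = (exp \<eta> - exp (-\<eta>))/2"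
    by (simp_all add: cosh_def sinh_def)
  have r: "(cosh \<eta> / sinh \<eta> - 1) / (cosh \<eta> / sinh \<eta> + 1) = exp (-2*\<eta>)"
  proof -
    have "(cosh \<eta> / sinh \<eta> - 1) / (cosh \<eta> / sinh \<eta> + 1) = (cosh \<eta> - sinh \<eta>) / (cosh \<eta> + sinh \<eta>)"
    proof -
      have a1: "cosh \<eta> / sinh \<eta> - 1 = (cosh \<eta> - sinh \<eta>) / sinh \<eta>" using sp by (simp add: field_simps)
      have a2: "cosh \<eta> / sinh \<eta> + 1 = (cosh \<eta> + sinh \<eta>) / sinh \<eta>" using sp by (simp add: field_simps)
      show ?thesis unfolding a1 a2 using sp by simp
    qed
    also have "\<dots> = exp (-\<eta>) / exp \<eta>" by (simp add: cosh_minus_sinh cosh_plus_sinh)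
    also have "\<dots> = exp (-2*\<eta>)"
    proof -
      have "exp (-2*\<eta>) = exp (-\<eta>) * exp (-\<eta>)" by (simp add: exp_add[symmetric])
      then show ?thesis by (simp add: exp_minus field_simps)
    qed
    finally show ?thesis .
  qed
  have pw: "exp (-2*\<eta>) powr (real p / 2) = exp (- (real p * \<eta>))"
    by (simp add: exp_powr_real)
  have w: "(1 - cosh \<eta> / sinh \<eta>) / 2 = -1 / (exp (2*\<eta>) - 1)"
  proof -
    have "exp \<eta> - exp (-\<eta>) \<noteq> 0" using sp sh by simp
    moreover have "exp (2*\<eta>) - 1 \<noteq> 0" using e2 epos by (smt (verit) one_less_exp_iff)
    ultimately show ?thesis unfolding ch sh e2 using epos
      by (simp add: exp_minus field_simps)
  qed
  show ?thesis unfolding assoc_legendre_neg_def r pw w by simp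
qed



theorem mainTheorem4:
  fixes p :: nat and \<eta> :: real
  assumes "p \<ge> 1" and "\<eta> > 0"
  shows "(\<Sum>k\<in>{- int p .. int p - 1}.
            (-1) powi (k + 1) * exp (real_of_int k * \<eta>) * logR p k (cosh \<eta>) / (real p - real_of_int k))
       = fact p * exp (real p * \<eta>) * sinh \<eta> ^ p *
         ((-1) ^ p / fact (2 * p) * (Digamma (real (2 * p + 1)) - Digamma 1)
              * assoc_legendre_pp p (cosh \<eta> / sinh \<eta>)
          + (\<Sum>k<p. (-1) ^ k * real (2 * k + 1) / (real (p - k) * real (p + k + 1))
              * assoc_legendre_neg k p (cosh \<eta> / sinh \<eta>)))"
proof -
  define s where "s = exp (2*\<eta>) - 1"
  define A where "A = exp (- (real p * \<eta>))"
  define c where "c k = (-1) ^ k * real (2 * k + 1) / (real (p - k) * real (p + k + 1))" for k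
  define F where "F k = hyp2F1_term k (real k + 1) (1 + real p) (-1/s)" for k
  have e2: "exp (2*\<eta>) = exp \<eta> * exp \<eta>" by (simp add: exp_add[symmetric])
  have s1: "1 + s = exp (2*\<eta>)" unfolding s_def by simp
  have spos: "s > 0" unfolding s_def using assms(2) by simp
  have shp: "sinh \<eta> > 0" using assms(2) by simp
  have expi: "exp (real_of_int (int p - 2 * int i) * \<eta>) = A * (1+s)^(p-i)" if "i \<le> p" for i
  proof -
    have "(1+s)^(p-i) = exp (real (p-i) * (2*\<eta>))" unfolding s1 exp_of_nat_mult ..
    then have "A * (1+s)^(p-i) = exp (- (real p * \<eta>) + real (p-i) * (2*\<eta>))" unfolding A_def exp_add by simp
    also have "- (real p * \<eta>) + real (p-i) * (2*\<eta>) = real_of_int (int p - 2 * int i) * \<eta>"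
      using that by (simp add: of_nat_diff algebra_simps)
    finally show ?thesis by simp
  qed
  have expp: "exp (real p * \<eta>) = A * (1+s)^p" using expi[of 0] by simp
  have shpow: "sinh \<eta> ^ p = (1/2^p) * A * s^p"
  proof -
    have h: "sinh \<eta> = exp (-\<eta>) * s / 2"
      unfolding s_def sinh_def e2 by (simp add: exp_minus field_simps)
    have "sinh \<eta> ^ p = exp (-\<eta>)^p * s^p / 2^p" unfolding h power_divide power_mult_distrib ..
    also have "exp (-\<eta>)^p = A" unfolding A_def exp_of_nat_mult[symmetric] by simp
    finally show ?thesis by simp
  qed
  have dig: "Digamma (real (2 * p + 1)) - Digamma 1 = harm (2*p)"
    using Digamma_of_nat[of "2*p", where 'a=real] Digamma_of_nat[of 0, where 'a=real] by (simp add: harm_def)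
  have L: "(\<Sum>k\<in>{- int p .. int p - 1}.
            (-1) powi (k + 1) * exp (real_of_int k * \<eta>) * logR p k (cosh \<eta>) / (real p - real_of_int k))
      = (1/2^p) * A * ((-1)^p * (\<Sum>m\<le>p. real (p choose m) * harm (2*p - m) * s^m))"
  proof -
    have X: "(\<Sum>i\<le>p. real (p choose i) * exp (real_of_int (int p - 2 * int i) * \<eta>)
        * ((-1)^(p+1) * (\<Sum>j\<in>{1..2*p}. (-1)^j * bz p (int j - int i) / real j)))
       = A * (-1)^(p+1) * (\<Sum>i\<le>p. real (p choose i) * (1 + s)^(p - i) * (\<Sum>j\<in>{1..2*p}. (-1)^j * bz p (int j - int i) / real j))"
      unfolding sum_distrib_left[of "A * (-1)^(p+1)"]
    proof (rule sum.cong[OF refl])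
      fix i assume "i \<in> {..p}"
      then have ip: "i \<le> p" by simp
      show "real (p choose i) * exp (real_of_int (int p - 2 * int i) * \<eta>)
        * ((-1)^(p+1) * (\<Sum>j\<in>{1..2*p}. (-1)^j * bz p (int j - int i) / real j))
        = A * (-1)^(p+1) * (real (p choose i) * (1 + s)^(p - i) * (\<Sum>j\<in>{1..2*p}. (-1)^j * bz p (int j - int i) / real j))"
        unfolding expi[OF ip] by (simp only: mult_ac)
    qed
    have "(\<Sum>k\<in>{- int p .. int p - 1}.
            (-1) powi (k + 1) * exp (real_of_int k * \<eta>) * logR p k (cosh \<eta>) / (real p - real_of_int k))
       = (1/2^p) * (A * (-1)^(p+1) * (\<Sum>i\<le>p. real (p choose i) * (1 + s)^(p - i) * (\<Sum>j\<in>{1..2*p}. (-1)^j * bz p (int j - int i) / real j)))"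
      unfolding lhs_reindex X ..
    also have "\<dots> = (1/2^p) * A * ((-1)^p * (\<Sum>m\<le>p. real (p choose m) * harm (2*p - m) * s^m))"
      unfolding lhs_poly by simp
    finally show ?thesis .
  qed
  have R: "fact p * exp (real p * \<eta>) * sinh \<eta> ^ p *
         ((-1) ^ p / fact (2 * p) * (Digamma (real (2 * p + 1)) - Digamma 1)
              * assoc_legendre_pp p (cosh \<eta> / sinh \<eta>)
          + (\<Sum>k<p. (-1) ^ k * real (2 * k + 1) / (real (p - k) * real (p + k + 1))
              * assoc_legendre_neg k p (cosh \<eta> / sinh \<eta>)))
      = (1/2^p) * A * ((-1)^p * harm (2*p) * (1+s)^p
     + (\<Sum>k<p. (-1)^k * real (2*k+1) / (real (p-k) * real (p+k+1)) * (s^p * hyp2F1_term k (real k + 1) (1 + real p) (-1/s))))"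
  proof -
    have t1: "fact p * exp (real p * \<eta>) * sinh \<eta> ^ p * ((-1) ^ p / fact (2 * p) * harm (2*p) * ((1 / sinh \<eta>)^p * (fact (2*p) / (2^p * fact p))))
        = (1/2^p) * A * ((-1)^p * harm (2*p) * (1+s)^p)"
    proof -
      have "sinh \<eta> ^ p * (1 / sinh \<eta>)^p = 1" using shp by (simp add: power_one_over field_simps)
      then show ?thesis unfolding expp using assms(2) by (simp add: field_simps)
    qed
    have t2: "fact p * exp (real p * \<eta>) * sinh \<eta> ^ p * (c k * (1 / fact p * A * F k))
        = (1/2^p) * A * (c k * (s^p * F k))" for k
    proof -
      have "exp (real p * \<eta>) * A = 1" unfolding A_def exp_add[symmetric] by simp
      then show ?thesis unfolding shpow by (simp add: field_simps)
    qed
    show ?thesis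
      unfolding dig pp_eval[OF assms(2)] neg_eval[OF assms(2)] s_def[symmetric] A_def[symmetric]
        F_def[symmetric] c_def[symmetric] distrib_left sum_distrib_left t1 t2 by simp
  qed
  show ?thesis unfolding L R rhs_poly[OF spos[THEN less_imp_neq, symmetric]] ..
qed


end
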